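(* Let $r>0$, $R_0>r$, $V_T>0$ and $\Delta V>0$. Put $\alpha=R_0/r$, $V_s=\frac{2\pi R_0V_T}{r}+V_T+\Delta V$, $R_{last}=\frac{rV_T(2\pi+1)}{V_s}$, $t_1=\frac{R_{last}}{V_s-V_T}$ and $t_2=\frac{2V_sR_{last}}{(V_s-V_T)^2}$. Suppose that at time $0$ every undetected evader lies in the closed disk of radius $R_{last}$ centered at the origin, and that each evader moves along a continuous path with speed at most $V_T$. The sensor at time $\tau$ is the segment $\{(x_s(\tau),y):|y|\le r\}$, where $x_s(\tau)=V_s\tau$ for $0\le\tau\le t_1$ and $x_s(\tau)=V_st_1-V_s(\tau-t_1)$ for $t_1\le\tau\le t_1+t_2$. An evader is detected if at some time its position lies on the sensor. If $$\Delta V\ge -2\pi\alpha V_T+\pi V_T+V_T+V_T\sqrt{\pi^2+6\pi+7},$$ then every evader is detected by time $t_1+t_2$, i.e. the evader region is completely cleaned by this final linear scan.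
   Context: This is the end game of the sweep process: evaders start in a disk of radius $R_0$, the sweeper line sensor has length $2r$, and the sweeper speed is $V_s=V_c+\Delta V$ with $V_c=2\pi R_0V_T/r+V_T$. After the circular sweeps and a last inward motion, the evader region is contained in a disk of radius $R_{last}$. The sensor then sweeps to the right until it catches the rightward expanding front of the evader region, and then to the left until it catches the leftward expanding front. *)

theory Defs
  imports "HOL-Analysis.Analysis"
begin

definition sweep_x :: "real \<Rightarrow> real \<Rightarrow> real \<Rightarrow> real" where
  "sweep_x Vs t1 \<tau> = (if \<tau> \<le> t1 then Vs * \<tau> else Vs * t1 - Vs * (\<tau> - t1))"

definition on_sensor :: "real \<Rightarrow> real \<Rightarrow> real \<Rightarrow> real \<Rightarrow> real \<times> real \<Rightarrow> bool" where
  "on_sensor r Vs t1 \<tau> z \<longleftrightarrow> fst z = sweep_x Vs t1 \<tau> \<and> \<bar>snd z\<bar> \<le> r"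

end

theory Submission
  imports Defs
begin

lemma abs_fst_le_norm: "\<bar>fst (z::real\<times>real)\<bar> \<le> norm z"
  using norm_fst_le[of "fst z" "snd z"] by simp

lemma abs_snd_le_norm: "\<bar>snd (z::real\<times>real)\<bar> \<le> norm z"
  using norm_snd_le[of "snd z" "fst z"] by simp

theorem theorem7:
  fixes r R0 VT dV \<alpha> Vs Rlast t1 t2 :: real
    and p :: "real \<Rightarrow> real \<times> real"
  assumes "r > 0" and "R0 > r" and "VT > 0" and "dV > 0"
    and "\<alpha> = R0 / r"
    and "Vs = 2 * pi * R0 * VT / r + VT + dV"
    and "Rlast = r * VT * (2 * pi + 1) / Vs"
    and "t1 = Rlast / (Vs - VT)"
    and "t2 = 2 * Vs * Rlast / (Vs - VT)\<^sup>2"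
    and "dV \<ge> - 2 * pi * \<alpha> * VT + pi * VT + VT + VT * sqrt (pi\<^sup>2 + 6 * pi + 7)"
    and "norm (p 0) \<le> Rlast"
    and "continuous_on {0..t1 + t2} p"
    and "\<And>s t. s \<in> {0..t1 + t2} \<Longrightarrow> t \<in> {0..t1 + t2} \<Longrightarrow> dist (p s) (p t) \<le> VT * \<bar>s - t\<bar>"
  shows "\<exists>\<tau> \<in> {0..t1 + t2}. on_sensor r Vs t1 \<tau> (p \<tau>)"
proof -
  note A = assms
  define s where "s = sqrt (pi\<^sup>2 + 6 * pi + 7)"
  have s0: "s \<ge> 0" unfolding s_def by (simp add: pi_gt_zero)
  have s2: "s^2 = pi\<^sup>2 + 6 * pi + 7" unfolding s_def
    by (subst real_sqrt_pow2) (auto intro!: add_nonneg_nonneg simp: pi_gt_zero less_imp_le)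
  have "2 * pi * R0 * VT / r = 2 * pi * \<alpha> * VT" using A(1,5) by simp
  hence Vsge: "Vs \<ge> (pi + 2) * VT + VT * s" using A(6,10) unfolding s_def by (simp add: algebra_simps)
  have pi0: "pi > 0" by (rule pi_gt_zero)
  have "(pi + 2) * VT > VT" using mult_pos_pos[OF pi0 A(3)] A(3) unfolding distrib_right by linarith
  moreover have "VT * s \<ge> 0" using A(3) s0 by simp
  ultimately have Vs0: "Vs > VT" using Vsge by linarith
  have VsP: "Vs > 0" using Vs0 A(3) by simp
  define Aa where "Aa = Vs - (pi + 2) * VT"
  have Aa1: "Aa \<ge> VT * s" using Vsge Aa_def by simp
  have "Aa^2 \<ge> (VT * s) ^ 2" using Aa1 s0 A(3) by (intro power_mono) auto
  hence Aa2: "Aa^2 \<ge> VT^2 * (pi\<^sup>2 + 6 * pi + 7)" using s2 by (simp add: power_mult_distrib)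
  have Aa0: "Aa \<ge> 0" using Aa1 mult_nonneg_nonneg[of VT s] s0 A(3) by linarith
  have key: "VT * (2*pi+1) * (Vs + VT) \<le> (Vs - VT)^2"
  proof -
    have e: "(Vs - VT)^2 - VT * (2*pi+1) * (Vs + VT) = Aa^2 + Aa * VT - VT^2 * (pi^2 + 5*pi + 2)"
      unfolding Aa_def by (simp add: power2_eq_square algebra_simps)
    have "Aa * VT \<ge> 0" using Aa0 A(3) by simp
    moreover have "VT^2 * (pi^2 + 5*pi + 2) \<le> VT^2 * (pi\<^sup>2 + 6 * pi + 7)"
      using pi0 by (intro mult_left_mono) auto
    ultimately show ?thesis using e Aa2 by linarith
  qed
  have u0: "Vs - VT > 0" using Vs0 by simp
  have Rl0: "Rlast \<ge> 0" using A(7) A(1,3) VsP pi0 by simp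
  have t10: "t1 \<ge> 0" using A(8) Rl0 u0 by simp
  have t20: "t2 \<ge> 0" using A(9) Rl0 VsP u0 by simp
  have t1eq: "t1 * (Vs - VT) = Rlast" using A(8) u0 by simp
  have t2eq: "t2 * (Vs - VT) = 2 * Vs * Rlast / (Vs - VT)" using A(9) u0 by (simp add: power2_eq_square)
  have total: "Rlast + VT * (t1 + t2) = r * VT * (2*pi+1) * (Vs + VT) / (Vs - VT)^2"
  proof -
    define u where "u = Vs - VT"
    have u0': "u > 0" using u0 u_def by simp
    have tt1: "t1 = Rlast / u" using A(8) u_def by simp
    have tt2: "t2 = 2 * Vs * Rlast / u^2" using A(9) u_def by simp
    have "Rlast + VT * (t1 + t2) = Rlast * (u^2 + VT*u + 2*VT*Vs) / u^2"
      unfolding tt1 tt2 using u0' by (simp add: field_simps power2_eq_square)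
    also have "u^2 + VT*u + 2*VT*Vs = Vs * (Vs + VT)" unfolding u_def
      by (simp add: power2_eq_square algebra_simps)
    also have "Rlast * (Vs * (Vs + VT)) = (Rlast * Vs) * (Vs + VT)" by simp
    also have "Rlast * Vs = r * VT * (2*pi+1)" using A(7) VsP by simp
    finally show ?thesis unfolding u_def .
  qed
  have bound: "Rlast + VT * (t1 + t2) \<le> r"
  proof -
    have "r * VT * (2*pi+1) * (Vs + VT) \<le> r * (Vs - VT)^2" using key A(1)
      by (metis mult.assoc mult_left_mono less_imp_le)
    thus ?thesis unfolding total using u0 by (simp add: divide_le_eq)
  qed
  have mv: "\<And>t. t \<in> {0..t1 + t2} \<Longrightarrow> norm (p t) \<le> Rlast + VT * t"
  proof -
    fix t assume t: "t \<in> {0..t1 + t2}"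
    have "0 \<in> {0..t1+t2}" using t10 t20 by simp
    from A(13)[OF t this] have "dist (p t) (p 0) \<le> VT * t" using t by simp
    thus "norm (p t) \<le> Rlast + VT * t" using A(11) norm_triangle_ineq2[of "p t" "p 0"]
      by (simp add: dist_norm)
  qed
  define g where "g t = fst (p t) - (Vs * t1 - Vs * (t - t1))" for t
  have sub: "{t1..t1+t2} \<subseteq> {0..t1+t2}" using t10 by auto
  have gc: "continuous_on {t1..t1+t2} g" unfolding g_def
    by (intro continuous_intros continuous_on_subset[OF A(12) sub])
  have in1: "t1 \<in> {0..t1+t2}" using t10 t20 by simp
  have in2: "t1 + t2 \<in> {0..t1+t2}" using t10 t20 by simp
  have "fst (p t1) \<le> norm (p t1)" using abs_fst_le_norm[of "p t1"] by linarith
  hence g1: "g t1 \<le> 0" using mv[OF in1] t1eq unfolding g_def by (simp add: algebra_simps)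
  have "- fst (p (t1+t2)) \<le> norm (p (t1+t2))"
    using abs_fst_le_norm[of "p (t1+t2)"] by linarith
  moreover have "Vs * t1 - Vs * t2 = - Rlast - VT * (t1 + t2)"
  proof -
    have "t2 * (Vs - VT) = Rlast + (Vs + VT) * t1"
    proof -
      have "2 * Vs * (t1 * (Vs - VT)) / (Vs - VT) = 2 * Vs * t1" using u0 by simp
      thus ?thesis unfolding t2eq t1eq[symmetric] by (simp add: algebra_simps)
    qed
    thus ?thesis by (simp add: algebra_simps)
  qed
  ultimately have g2: "g (t1+t2) \<ge> 0" using mv[OF in2] unfolding g_def by simp
  obtain \<tau> where tau: "\<tau> \<in> {t1..t1+t2}" "g \<tau> = 0"
    using IVT'[of g t1 0 "t1+t2", OF g1 g2] gc t20 by auto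
  have tin: "\<tau> \<in> {0..t1+t2}" using tau sub by auto
  have sw: "sweep_x Vs t1 \<tau> = Vs * t1 - Vs * (\<tau> - t1)"
    unfolding sweep_x_def using tau by auto
  have "\<bar>snd (p \<tau>)\<bar> \<le> norm (p \<tau>)" by (rule abs_snd_le_norm)
  also have "\<dots> \<le> Rlast + VT * \<tau>" by (rule mv[OF tin])
  also have "\<dots> \<le> Rlast + VT * (t1 + t2)" using tin A(3) by (intro add_left_mono mult_left_mono) auto
  also have "\<dots> \<le> r" by (rule bound)
  finally have "\<bar>snd (p \<tau>)\<bar> \<le> r" .
  moreover have "fst (p \<tau>) = sweep_x Vs t1 \<tau>" using tau(2) sw unfolding g_def by simp
  ultimately show ?thesis using tin unfolding on_sensor_def by blast
qed

end
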